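(* Assume the structural equation model below, a budget constraint with $\gamma_g^*\in\Gamma(\tau,b)$, and the no-measurement-error (NOME) assumption that $\beta_\Phi^*$ is known exactly. Let $\hat\beta_y=\widehat{\mathrm{Cov}}(Y,Z)$ be computed from $n$ i.i.d. samples of $P(X,Y,Z)$, and assume each $(\hat\beta_y)_i$ has finite variance so that $\sqrt n((\hat\beta_y)_i-(\beta_y^* )_i)/\mathrm{Se}_i\to\mathcal{N}(0,1)$ in distribution, with $\mathrm{Se}_i$ consistently estimated by a plug-in $\widehat{\mathrm{Se}}_i$. Fix $\alpha\in(0,1)$ and let $(\delta\beta_y)_i=z_{1-\alpha/(2d_Z)}\widehat{\mathrm{Se}}_i/\sqrt n$ be the half-width of the normal-approximation $(1-\alpha/d_Z)\times100\%$ confidence interval for $(\beta_y)_i$ centered at $(\hat\beta_y)_i$ ($z_p$ the standard normal $p$-quantile). For each maximal assignment $\tilde U$ let $\hat\Gamma_{\tilde U}=\{\gamma\in\mathbb{R}^{d_Z}:|\gamma_i|\le\tau_{\tilde U_i}+(\delta\beta_y)_i\ \forall i\}$ and $\hat\Gamma_\alpha=\bigcup_{\tilde U\in\Sigma_b^{(\max)}}\hat\Gamma_{\tilde U}$. With $$\hat{\mathcal{T}}_\alpha=\{\theta\in\mathbb{R}^{d_\Phi}:\hat\beta_y-\theta\cdot\beta_\Phi^*\in\hat\Gamma_\alpha\},$$ we have, as $n\to\infty$, $P(\theta^*\in\hat{\mathcal{T}}_\alpha)\ge 1-\alpha$ asymptotically.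
   Context: Model: $Z:=f_z(\epsilon_z)$, $X:=f_x(Z,\epsilon_x)$, $Y:=\theta^*\cdot\Phi(X)+g_y(Z,\epsilon_y)$, $Z\in\mathbb{R}^{d_Z}$, known $\Phi:\Omega_X\to\mathbb{R}^{d_\Phi}$, $d_\Phi\le d_Z$. $\beta_\Phi^*=\mathrm{Cov}(\Phi(X),Z)$ ($d_\Phi\times d_Z$, columns $(\beta_\Phi^* )_i$), $\beta_y^*=\mathrm{Cov}(Y,Z)$, $\gamma_g^*=\mathrm{Cov}(g_y(Z,\epsilon_y),Z)=\beta_y^*-\theta^*\cdot\beta_\Phi^*$, with $\theta\cdot\beta_\Phi$ the vector of components $\theta\cdot(\beta_\Phi)_i$. Budget constraints: thresholds $0\le\tau_1<\dots<\tau_K<\infty$ and integer budgets $0<b_1<\dots<b_K\le d_Z$, $K\le d_Z$. $\Gamma(\tau,b)=\{\gamma\in\mathbb{R}^{d_Z}:\ \#\{i:|\gamma_i|\le\tau_\ell\}\ge b_\ell\text{ for all }\ell\in[K]\}$. Set $b_0=0$, $b_{K+1}=d_Z$, $\tau_{K+1}=+\infty$. The set $\Sigma_b^{(\max)}$ of maximal assignments consists of all $\tilde U\in\{1,\dots,K+1\}^{d_Z}$ having exactly $b_\ell-b_{\ell-1}$ components equal to $\ell$ for each $\ell\in\{1,\dots,K+1\}$; for such $\tilde U$, $\tau_{\tilde U_i}$ denotes the threshold indexed by $\tilde U_i$. Then $\Gamma(\tau,b)=\bigcup_{\tilde U\in\Sigma_b^{(\max)}}\{\gamma:|\gamma_i|\le\tau_{\tilde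 U_i}\ \forall i\}$. *)

theory Defs
  imports "HOL-Probability.Probability"
begin

definition budget_set :: "nat \<Rightarrow> (nat \<Rightarrow> real) \<Rightarrow> (nat \<Rightarrow> nat) \<Rightarrow> (real ^ 'd::finite) set" where
  "budget_set K tau b = {\<gamma>. \<forall>l\<in>{1..K}. b l \<le> card {i. \<bar>\<gamma> $ i\<bar> \<le> tau l}}"

definition ext_budget :: "nat \<Rightarrow> (nat \<Rightarrow> nat) \<Rightarrow> nat \<Rightarrow> nat \<Rightarrow> nat" where
  "ext_budget K b d l = (if l = 0 then 0 else if l = K + 1 then d else b l)"

definition max_assignments :: "nat \<Rightarrow> (nat \<Rightarrow> nat) \<Rightarrow> ('d::finite \<Rightarrow> nat) set" where
  "max_assignments K b = {U. (\<forall>i. U i \<in> {1..K+1}) \<and>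
     (\<forall>l\<in>{1..K+1}. card {i. U i = l} = ext_budget K b CARD('d) l - ext_budget K b CARD('d) (l - 1))}"

text \<open>Enlarged set hat-Gamma_alpha = union over maximal assignments U of the boxes
  |gamma_i| <= tau_(U i) + delta_i, where tau_(K+1) = +infinity (no constraint).\<close>
definition enlarged_budget_set ::
  "nat \<Rightarrow> (nat \<Rightarrow> real) \<Rightarrow> (nat \<Rightarrow> nat) \<Rightarrow> real ^ 'd::finite \<Rightarrow> (real ^ 'd) set" where
  "enlarged_budget_set K tau b \<delta> =
     (\<Union>U\<in>max_assignments K b. {\<gamma>. \<forall>i. U i = K + 1 \<or> \<bar>\<gamma> $ i\<bar> \<le> tau (U i) + \<delta> $ i})"

definition covar :: "'a measure \<Rightarrow> ('a \<Rightarrow> real) \<Rightarrow> ('a \<Rightarrow> real) \<Rightarrow> real" where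
  "covar M f g = (\<integral>x. f x * g x \<partial>M) - (\<integral>x. f x \<partial>M) * (\<integral>x. g x \<partial>M)"

definition std_normal_quantile :: "real \<Rightarrow> real" where
  "std_normal_quantile p = (THE z. cdf std_normal_distribution z = p)"

definition theta_dot :: "real ^ 'p::finite \<Rightarrow> real ^ 'd::finite ^ 'p \<Rightarrow> real ^ 'd" where
  "theta_dot \<theta> B = (\<chi> i. \<Sum>k\<in>UNIV. \<theta> $ k * B $ k $ i)"

definition sample_cov :: "nat \<Rightarrow> (nat \<Rightarrow> real) \<Rightarrow> (nat \<Rightarrow> real) \<Rightarrow> real" where
  "sample_cov n y z = (\<Sum>j<n. y j * z j) / n - ((\<Sum>j<n. y j) / n) * ((\<Sum>j<n. z j) / n)"

end

theory Submission
  imports Defs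
begin


abbreviation "Phi0 \<equiv> cdf std_normal_distribution"

lemma std_normal_single: "measure std_normal_distribution {x} = 0"
proof -
  have "{x} \<in> null_sets std_normal_distribution"
  proof -
    have "AE y in lborel. y \<in> {x} \<longrightarrow> ennreal (std_normal_density y) = 0"
      by (rule AE_I'[of "{x}"]) auto
    then show ?thesis by (subst null_sets_density_iff) auto
  qed
  then show ?thesis by (simp add: measure_def null_setsD1)
qed

lemma Phi0_cont: "isCont Phi0 x"
proof -
  interpret real_distribution std_normal_distribution by (rule real_dist_normal_dist)
  show ?thesis using isCont_cdf std_normal_single by simp
qed

lemma Phi0_sym: "Phi0 (- x) = 1 - Phi0 x"
proof -
  let ?f = "\<lambda>y. ennreal (std_normal_density y)"
  have "emeasure std_normal_distribution {..<-x} = (\<integral>\<^sup>+y. ?f y * indicator {..<-x} y \<partial>lborel)"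
    by (subst emeasure_density) auto
  also have "\<dots> = (\<integral>\<^sup>+y. ?f (0 + -1*y) * indicator {..<-x} (0 + -1 * y) \<partial>lborel)"
    by (subst nn_integral_real_affine[where c="-1" and t=0]) auto
  also have "\<dots> = (\<integral>\<^sup>+y. ?f y * indicator {x<..} y \<partial>lborel)"
    by (intro nn_integral_cong) (auto simp: std_normal_density_def indicator_def)
  also have "\<dots> = emeasure std_normal_distribution {x<..}"
    by (subst emeasure_density) auto
  finally have e: "emeasure std_normal_distribution {..<-x} = emeasure std_normal_distribution {x<..}" .
  interpret real_distribution std_normal_distribution by (rule real_dist_normal_dist)
  have "measure std_normal_distribution {..<-x} = measure std_normal_distribution {x<..}"
    using e by (simp add: measure_def)
  moreover have "measure std_normal_distribution {..-x} = measure std_normal_distribution {..<-x}"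
  proof -
    have "{..-x} = {..<-x} \<union> {-x}" by auto
    then have "measure std_normal_distribution {..-x} \<le> measure std_normal_distribution {..<-x} + measure std_normal_distribution {-x}"
      using measure_Un_le[of "{..<-x}" std_normal_distribution "{-x}"] by simp
    moreover have "measure std_normal_distribution {..<-x} \<le> measure std_normal_distribution {..-x}"
      by (intro finite_measure_mono) auto
    ultimately show ?thesis using std_normal_single by simp
  qed
  moreover have "measure std_normal_distribution {x<..} = 1 - Phi0 x"
  proof -
    have "{x<..} = space std_normal_distribution - {..x}" by auto
    then show ?thesis using prob_compl[of "{..x}"] by (simp add: cdf_def2)
  qed
  ultimately show ?thesis by (simp add: cdf_def2)
qed

lemma Phi0_strict:
  assumes xy: "x < y" shows "Phi0 x < Phi0 y"
proof -
  interpret real_distribution std_normal_distribution by (rule real_dist_normal_dist)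
  define M where "M = \<bar>x\<bar> + \<bar>y\<bar>"
  define c where "c = std_normal_density M"
  have cpos: "0 < c" unfolding c_def by (rule normal_density_pos) simp
  have le: "c \<le> std_normal_density t" if "t \<in> {x<..y}" for t
  proof -
    have "\<bar>t\<bar> \<le> M" using that by (auto simp: M_def)
    then have "t^2 \<le> M^2" by (metis abs_ge_zero power2_abs power_mono)
    then show ?thesis unfolding c_def std_normal_density_def by (intro mult_left_mono) auto
  qed
  have "ennreal (c * (y - x)) = (\<integral>\<^sup>+t. ennreal c * indicator {x<..y} t \<partial>lborel)"
    using xy cpos by (simp add: nn_integral_cmult_indicator ennreal_mult)
  also have "\<dots> \<le> (\<integral>\<^sup>+t. ennreal (std_normal_density t) * indicator {x<..y} t \<partial>lborel)"
    by (intro nn_integral_mono) (auto simp: indicator_def le)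
  also have "\<dots> = emeasure std_normal_distribution {x<..y}"
    by (subst emeasure_density) auto
  finally have "c * (y - x) \<le> measure std_normal_distribution {x<..y}"
    by (simp add: emeasure_eq_measure)
  moreover have "0 < c * (y - x)" using cpos xy by simp
  ultimately show ?thesis using cdf_diff_eq[OF xy] by simp
qed

lemma Phi0_quantile:
  assumes "0 < p" "p < 1"
  shows "Phi0 (THE z. Phi0 z = p) = p"
proof -
  interpret real_distribution std_normal_distribution by (rule real_dist_normal_dist)
  have "eventually (\<lambda>z. Phi0 z < p) at_bot"
    using cdf_lim_at_bot assms by (simp add: order_tendsto_iff)
  then obtain a where a: "Phi0 a < p" by (auto simp: eventually_at_bot_linorder)
  have "eventually (\<lambda>z. p < Phi0 z) at_top"
    using cdf_lim_at_top_prob assms by (simp add: order_tendsto_iff)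
  then obtain b where b: "p < Phi0 b" by (auto simp: eventually_at_top_linorder)
  have ab: "a \<le> b"
  proof (rule ccontr)
    assume "\<not> a \<le> b" then have "Phi0 b \<le> Phi0 a" by (intro cdf_nondecreasing) simp
    with a b show False by simp
  qed
  have "\<exists>z\<ge>a. z \<le> b \<and> Phi0 z = p"
    using a b ab Phi0_cont by (intro IVT) auto
  then obtain z where z: "Phi0 z = p" by blast
  have "\<exists>!z. Phi0 z = p"
  proof
    show "Phi0 z = p" by (rule z)
    fix w assume w: "Phi0 w = p"
    show "w = z"
      using Phi0_strict[of w z] Phi0_strict[of z w] w z by (cases w z rule: linorder_cases) auto
  qed
  then show ?thesis by (rule theI')
qed



lemma budget_assign:
  fixes \<gamma> :: "real ^ 'd::finite"
  assumes b_mono: "\<And>l. 1 \<le> l \<Longrightarrow> l < K \<Longrightarrow> b l < b (Suc l)"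
    and b_le: "b K \<le> CARD('d)"
    and g: "\<gamma> \<in> budget_set K tau b"
  shows "\<exists>U\<in>max_assignments K b. \<forall>i. U i = K + 1 \<or> \<bar>\<gamma> $ i\<bar> \<le> tau (U i)"
proof -
  define d where "d = CARD('d)"
  define eb where "eb = ext_budget K b d"
  define f where "f = (\<lambda>i. \<bar>\<gamma> $ i\<bar>)"
  obtain xs :: "'d list" where xs: "distinct xs" "set xs = UNIV"
    using finite_distinct_list[of "UNIV :: 'd set"] by auto
  define ys where "ys = sort_key f xs"
  have ys: "distinct ys" "set ys = UNIV" "sorted (map f ys)"
    using xs by (auto simp: ys_def)
  have len: "length ys = d" unfolding d_def using ys distinct_card by fastforce
  define r where "r = (\<lambda>i. THE p. p < length ys \<and> ys ! p = i)"
  have r: "r i < d \<and> ys ! (r i) = i" for i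
  proof -
    have "\<exists>!p. p < length ys \<and> ys ! p = i" using ys by (intro distinct_Ex1) auto
    then show ?thesis unfolding r_def using len by (metis (mono_tags, lifting) theI')
  qed
  have r_nth: "r (ys ! p) = p" if "p < d" for p
    using r[of "ys ! p"] ys(1) len that by (metis nth_eq_iff_index_eq)
  have b_mono_le: "b l \<le> b m" if "1 \<le> l" "l \<le> m" "m \<le> K" for l m
    using that
  proof (induction m)
    case 0 then show ?case by simp
  next
    case (Suc m)
    show ?case
    proof (cases "l = Suc m")
      case True then show ?thesis by simp
    next
      case False then have "l \<le> m" using Suc by simp
      then show ?thesis using Suc b_mono[of m] by fastforce
    qed
  qed
  have eb_mono: "eb l \<le> eb m" if "l \<le> m" "m \<le> K + 1" for l m
  proof -
    have "b l \<le> d" if "1 \<le> l" "l \<le> K" for l using b_mono_le[of l K] that b_le by (simp add: d_def)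
    then show ?thesis using that b_mono_le[of l m]
      unfolding eb_def ext_budget_def by auto
  qed
  have eb0: "eb 0 = 0" and ebK: "eb (K + 1) = d" by (auto simp: eb_def ext_budget_def)
  define U where "U = (\<lambda>i. LEAST l. r i < eb l)"
  have U_char: "U i = l \<longleftrightarrow> eb (l - 1) \<le> r i \<and> r i < eb l" if "1 \<le> l" "l \<le> K + 1" for i l
  proof
    assume "U i = l"
    moreover have "r i < eb (U i)" unfolding U_def
      by (rule LeastI[of _ "K+1"]) (use r ebK in auto)
    moreover have "\<not> r i < eb (l - 1)" if "U i = l"
      using not_less_Least[of "l - 1" "\<lambda>l. r i < eb l"] that \<open>1 \<le> l\<close> unfolding U_def by auto
    ultimately show "eb (l - 1) \<le> r i \<and> r i < eb l" by auto
  next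
    assume a: "eb (l - 1) \<le> r i \<and> r i < eb l"
    show "U i = l" unfolding U_def
    proof (rule Least_equality)
      show "r i < eb l" using a by simp
      fix m assume "r i < eb m"
      show "l \<le> m"
      proof (rule ccontr)
        assume "\<not> l \<le> m"
        then have "eb m \<le> eb (l - 1)" using that by (intro eb_mono) auto
        then show False using a \<open>r i < eb m\<close> by simp
      qed
    qed
  qed
  have U_range: "U i \<in> {1..K+1}" for i
  proof -
    have "r i < eb (U i)" unfolding U_def
      by (rule LeastI[of _ "K+1"]) (use r ebK in auto)
    moreover have "U i \<le> K + 1" unfolding U_def
      by (rule Least_le) (use r ebK in auto)
    ultimately show ?thesis using eb0 by (cases "U i") auto
  qed
  have card_U: "card {i. U i = l} = eb l - eb (l - 1)" if "l \<in> {1..K+1}" for l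
  proof -
    have "{i. U i = l} = (\<lambda>p. ys ! p) ` {eb (l - 1)..<eb l}"
    proof (intro set_eqI iffI)
      fix i assume "i \<in> {i. U i = l}"
      then have "eb (l - 1) \<le> r i \<and> r i < eb l" using U_char that by auto
      then show "i \<in> (\<lambda>p. ys ! p) ` {eb (l - 1)..<eb l}" using r[of i] by (metis atLeastLessThan_iff image_eqI)
    next
      fix i assume "i \<in> (\<lambda>p. ys ! p) ` {eb (l - 1)..<eb l}"
      then obtain p where p: "i = ys ! p" "eb (l - 1) \<le> p" "p < eb l" by auto
      have "eb l \<le> d" using eb_mono[of l "K+1"] that ebK by auto
      then have "r i = p" using p r_nth by auto
      then show "i \<in> {i. U i = l}" using U_char that p by auto
    qed
    moreover have "inj_on (\<lambda>p. ys ! p) {eb (l - 1)..<eb l}"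
    proof -
      have "eb l \<le> d" using eb_mono[of l "K+1"] that ebK by auto
      then show ?thesis using ys(1) len by (auto simp: inj_on_def nth_eq_iff_index_eq)
    qed
    ultimately show ?thesis by (simp add: card_image)
  qed
  have bound: "\<bar>\<gamma> $ i\<bar> \<le> tau (U i)" if "U i \<noteq> K + 1" for i
  proof (rule ccontr)
    let ?l = "U i"
    have l: "1 \<le> ?l" "?l \<le> K" using U_range[of i] that by auto
    have ri: "r i < b ?l" using U_char[of ?l i] l unfolding eb_def ext_budget_def by auto
    assume "\<not> \<bar>\<gamma> $ i\<bar> \<le> tau ?l"
    have sub: "{j. \<bar>\<gamma> $ j\<bar> \<le> tau ?l} \<subseteq> (\<lambda>p. ys ! p) ` {..<r i}"
    proof
      fix j assume j: "j \<in> {j. \<bar>\<gamma> $ j\<bar> \<le> tau ?l}"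
      have "r j < r i"
      proof (rule ccontr)
        assume "\<not> r j < r i"
        then have "f (ys ! r i) \<le> f (ys ! r j)"
          using sorted_nth_mono[OF ys(3), of "r i" "r j"] r[of j] len by simp
        then show False using r[of i] r[of j] j \<open>\<not> \<bar>\<gamma> $ i\<bar> \<le> tau ?l\<close> by (simp add: f_def)
      qed
      then show "j \<in> (\<lambda>p. ys ! p) ` {..<r i}" using r[of j] by (metis image_eqI lessThan_iff)
    qed
    have "b ?l \<le> card {j. \<bar>\<gamma> $ j\<bar> \<le> tau ?l}" using g l by (auto simp: budget_set_def)
    also have "\<dots> \<le> card ((\<lambda>p. ys ! p) ` {..<r i})" by (intro card_mono sub) simp
    also have "\<dots> \<le> r i" using card_image_le[of "{..<r i}" "\<lambda>p. ys ! p"] by simp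
    finally show False using ri by simp
  qed
  have "U \<in> max_assignments K b"
    unfolding max_assignments_def using U_range card_U by (auto simp: eb_def d_def)
  then show ?thesis using bound by blast
qed





lemma L2_int:
  fixes f :: "'a \<Rightarrow> real"
  assumes "prob_space M" "f \<in> borel_measurable M" "integrable M (\<lambda>x. (f x)\<^sup>2)"
  shows "integrable M f"
proof -
  interpret prob_space M by fact
  have i: "integrable M (\<lambda>x. 1 + (f x)\<^sup>2)" using assms by simp
  show ?thesis
  proof (rule Bochner_Integration.integrable_bound[OF i])
    show "f \<in> borel_measurable M" by fact
    show "AE x in M. norm (f x) \<le> norm (1 + (f x)\<^sup>2)"
    proof (intro AE_I2)
      fix x
      have "2 * \<bar>f x\<bar> * 1 \<le> \<bar>f x\<bar>\<^sup>2 + 1\<^sup>2" by (rule sum_squares_bound)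
      then show "norm (f x) \<le> norm (1 + (f x)\<^sup>2)" by simp
    qed
  qed
qed

lemma L2_prod:
  fixes f g :: "'a \<Rightarrow> real"
  assumes "f \<in> borel_measurable M" "integrable M (\<lambda>x. (f x)\<^sup>2)"
    "g \<in> borel_measurable M" "integrable M (\<lambda>x. (g x)\<^sup>2)"
  shows "integrable M (\<lambda>x. f x * g x)"
proof -
  have i: "integrable M (\<lambda>x. (f x)\<^sup>2 + (g x)\<^sup>2)" using assms by simp
  show ?thesis
  proof (rule Bochner_Integration.integrable_bound[OF i])
    show "(\<lambda>x. f x * g x) \<in> borel_measurable M" using assms by simp
    show "AE x in M. norm (f x * g x) \<le> norm ((f x)\<^sup>2 + (g x)\<^sup>2)"
    proof (intro AE_I2)
      fix x
      have "2 * \<bar>f x\<bar> * \<bar>g x\<bar> \<le> (f x)\<^sup>2 + (g x)\<^sup>2"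
        using sum_squares_bound[of "\<bar>f x\<bar>" "\<bar>g x\<bar>"] by simp
      moreover have "0 \<le> \<bar>f x\<bar> * \<bar>g x\<bar>" by simp
      ultimately have "\<bar>f x\<bar> * \<bar>g x\<bar> \<le> (f x)\<^sup>2 + (g x)\<^sup>2" by linarith
      then show "norm (f x * g x) \<le> norm ((f x)\<^sup>2 + (g x)\<^sup>2)" by (simp add: abs_mult)
    qed
  qed
qed

lemma covar_lin:
  fixes Ph :: "'w \<Rightarrow> real ^ 'p::finite"
  assumes P: "prob_space P"
    and Z: "Z \<in> borel_measurable P" "integrable P (\<lambda>x. (Z x)\<^sup>2)"
    and Ph: "\<And>k. (\<lambda>x. Ph x $ k) \<in> borel_measurable P \<and> integrable P (\<lambda>x. (Ph x $ k)\<^sup>2)"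
    and g: "g \<in> borel_measurable P" "integrable P (\<lambda>x. (g x)\<^sup>2)"
  shows "covar P (\<lambda>x. \<theta> \<bullet> Ph x + g x) Z = (\<Sum>k\<in>UNIV. \<theta> $ k * covar P (\<lambda>x. Ph x $ k) Z) + covar P g Z"
proof -
  have iZ: "integrable P Z" using L2_int P Z by blast
  have ig: "integrable P g" using L2_int P g by blast
  have iPh: "integrable P (\<lambda>x. Ph x $ k)" for k using L2_int P Ph by blast
  have iPhZ: "integrable P (\<lambda>x. Ph x $ k * Z x)" for k using L2_prod Ph Z by blast
  have igZ: "integrable P (\<lambda>x. g x * Z x)" using L2_prod g Z by blast
  have e1: "(\<integral>x. (\<theta> \<bullet> Ph x + g x) * Z x \<partial>P) = (\<Sum>k\<in>UNIV. \<theta> $ k * (\<integral>x. Ph x $ k * Z x \<partial>P)) + (\<integral>x. g x * Z x \<partial>P)"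
  proof -
    have "(\<integral>x. (\<theta> \<bullet> Ph x + g x) * Z x \<partial>P) = (\<integral>x. (\<Sum>k\<in>UNIV. \<theta> $ k * (Ph x $ k * Z x)) + g x * Z x \<partial>P)"
      by (intro Bochner_Integration.integral_cong) (auto simp: inner_vec_def sum_distrib_right sum_distrib_left algebra_simps)
    also have "\<dots> = (\<integral>x. (\<Sum>k\<in>UNIV. \<theta> $ k * (Ph x $ k * Z x)) \<partial>P) + (\<integral>x. g x * Z x \<partial>P)"
      using iPhZ igZ by (intro Bochner_Integration.integral_add) auto
    also have "(\<integral>x. (\<Sum>k\<in>UNIV. \<theta> $ k * (Ph x $ k * Z x)) \<partial>P) = (\<Sum>k\<in>UNIV. \<theta> $ k * (\<integral>x. Ph x $ k * Z x \<partial>P))"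
      using iPhZ by (subst Bochner_Integration.integral_sum) auto
    finally show ?thesis .
  qed
  have e2: "(\<integral>x. (\<theta> \<bullet> Ph x + g x) \<partial>P) = (\<Sum>k\<in>UNIV. \<theta> $ k * (\<integral>x. Ph x $ k \<partial>P)) + (\<integral>x. g x \<partial>P)"
  proof -
    have "(\<integral>x. (\<theta> \<bullet> Ph x + g x) \<partial>P) = (\<integral>x. (\<Sum>k\<in>UNIV. \<theta> $ k * Ph x $ k) + g x \<partial>P)"
      by (intro Bochner_Integration.integral_cong) (auto simp: inner_vec_def)
    also have "\<dots> = (\<integral>x. (\<Sum>k\<in>UNIV. \<theta> $ k * Ph x $ k) \<partial>P) + (\<integral>x. g x \<partial>P)"
      using iPh ig by (intro Bochner_Integration.integral_add) auto
    also have "(\<integral>x. (\<Sum>k\<in>UNIV. \<theta> $ k * Ph x $ k) \<partial>P) = (\<Sum>k\<in>UNIV. \<theta> $ k * (\<integral>x. Ph x $ k \<partial>P))"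
      using iPh by (subst Bochner_Integration.integral_sum) auto
    finally show ?thesis .
  qed
  show ?thesis unfolding covar_def e1 e2
    by (simp add: algebra_simps sum_subtractf sum_distrib_left sum_distrib_right)
qed


theorem theorem4:
  fixes P :: "'w measure" and S :: "'s measure"
    and fz :: "'ez \<Rightarrow> real ^ 'dz::finite" and fx :: "real ^ 'dz \<Rightarrow> 'ex \<Rightarrow> 'x"
    and gy :: "real ^ 'dz \<Rightarrow> 'ey \<Rightarrow> real"
    and Ez :: "'w \<Rightarrow> 'ez" and Ex :: "'w \<Rightarrow> 'ex" and Ey :: "'w \<Rightarrow> 'ey"
    and Zv :: "'w \<Rightarrow> real ^ 'dz" and Xv :: "'w \<Rightarrow> 'x" and Yv :: "'w \<Rightarrow> real"
    and Phi :: "'x \<Rightarrow> real ^ 'dp::finite" and \<theta>s :: "real ^ 'dp"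
    and K :: nat and tau :: "nat \<Rightarrow> real" and b :: "nat \<Rightarrow> nat" and \<alpha> :: real
    and Smp :: "nat \<Rightarrow> 's \<Rightarrow> 'w"
    and Se :: "real ^ 'dz" and sehat :: "nat \<Rightarrow> 's \<Rightarrow> real ^ 'dz"
    and beta_Phi :: "real ^ 'dz ^ 'dp" and beta_y gamma_g :: "real ^ 'dz"
    and beta_hat delta :: "nat \<Rightarrow> 's \<Rightarrow> real ^ 'dz"
    and T_hat :: "nat \<Rightarrow> 's \<Rightarrow> (real ^ 'dp) set"
  assumes P_prob: "prob_space P" and S_prob: "prob_space S"
    \<comment> \<open>structural equation model\<close>
    and Z_eq: "\<And>\<omega>. Zv \<omega> = fz (Ez \<omega>)"
    and X_eq: "\<And>\<omega>. Xv \<omega> = fx (Zv \<omega>) (Ex \<omega>)"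
    and Y_eq: "\<And>\<omega>. Yv \<omega> = \<theta>s \<bullet> Phi (Xv \<omega>) + gy (Zv \<omega>) (Ey \<omega>)"
    and dims: "CARD('dp) \<le> CARD('dz)"
    \<comment> \<open>finite second moments so that the population covariances exist\<close>
    and Z_L2: "\<And>i. (\<lambda>\<omega>. Zv \<omega> $ i) \<in> borel_measurable P \<and> integrable P (\<lambda>\<omega>. (Zv \<omega> $ i)\<^sup>2)"
    and Phi_L2: "\<And>k. (\<lambda>\<omega>. Phi (Xv \<omega>) $ k) \<in> borel_measurable P
                     \<and> integrable P (\<lambda>\<omega>. (Phi (Xv \<omega>) $ k)\<^sup>2)"
    and g_L2: "(\<lambda>\<omega>. gy (Zv \<omega>) (Ey \<omega>)) \<in> borel_measurable P
               \<and> integrable P (\<lambda>\<omega>. (gy (Zv \<omega>) (Ey \<omega>))\<^sup>2)"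
    \<comment> \<open>population covariances\<close>
    and beta_Phi_def: "beta_Phi = (\<chi> k i. covar P (\<lambda>\<omega>. Phi (Xv \<omega>) $ k) (\<lambda>\<omega>. Zv \<omega> $ i))"
    and beta_y_def: "beta_y = (\<chi> i. covar P Yv (\<lambda>\<omega>. Zv \<omega> $ i))"
    and gamma_g_def: "gamma_g = (\<chi> i. covar P (\<lambda>\<omega>. gy (Zv \<omega>) (Ey \<omega>)) (\<lambda>\<omega>. Zv \<omega> $ i))"
    \<comment> \<open>budget constraint\<close>
    and K_pos: "1 \<le> K" and K_le: "K \<le> CARD('dz)"
    and tau_nonneg: "0 \<le> tau 1" and tau_mono: "\<And>l. 1 \<le> l \<Longrightarrow> l < K \<Longrightarrow> tau l < tau (Suc l)"
    and b_pos: "0 < b 1" and b_mono: "\<And>l. 1 \<le> l \<Longrightarrow> l < K \<Longrightarrow> b l < b (Suc l)"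
    and b_le: "b K \<le> CARD('dz)"
    and gamma_budget: "gamma_g \<in> budget_set K tau b"
    \<comment> \<open>i.i.d. samples from the population\<close>
    and iid_indep: "prob_space.indep_vars S (\<lambda>_. P) Smp UNIV"
    and iid_distr: "\<And>j. distr S P (Smp j) = P"
    and beta_hat_def: "\<And>n s. beta_hat n s =
          (\<chi> i. sample_cov n (\<lambda>j. Yv (Smp j s)) (\<lambda>j. Zv (Smp j s) $ i))"
    and beta_hat_var: "\<And>n i. integrable S (\<lambda>s. (beta_hat n s $ i)\<^sup>2)"
    \<comment> \<open>asymptotic normality\<close>
    and Se_pos: "\<And>i. 0 < Se $ i"
    and asym_normal: "\<And>i. weak_conv_m
          (\<lambda>n. distr S borel (\<lambda>s. sqrt (real n) * (beta_hat n s $ i - beta_y $ i) / Se $ i))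
          std_normal_distribution"
    \<comment> \<open>consistent plug-in standard errors\<close>
    and sehat_meas: "\<And>n. sehat n \<in> borel_measurable S"
    and sehat_cons: "\<And>i \<epsilon>. 0 < \<epsilon> \<Longrightarrow>
          (\<lambda>n. measure S {s \<in> space S. \<epsilon> < \<bar>sehat n s $ i - Se $ i\<bar>}) \<longlonglongrightarrow> 0"
    and alpha: "0 < \<alpha>" "\<alpha> < 1"
    and delta_def: "\<And>n s. delta n s =
          (\<chi> i. std_normal_quantile (1 - \<alpha> / (2 * real CARD('dz))) * sehat n s $ i / sqrt (real n))"
    and T_hat_def: "\<And>n s. T_hat n s =
          {\<theta>. beta_hat n s - theta_dot \<theta> beta_Phi \<in> enlarged_budget_set K tau b (delta n s)}"
  shows "ereal (1 - \<alpha>) \<le> liminf (\<lambda>n. ereal (measure S {s \<in> space S. \<theta>s \<in> T_hat n s}))"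
  proof -
  interpret S: prob_space S by (rule S_prob)
  interpret P: prob_space P by (rule P_prob)
  define d where "d = CARD('dz)"
  have d_pos: "0 < real d" unfolding d_def by simp
  define p where "p = 1 - \<alpha> / (2 * real d)"
  define z where "z = std_normal_quantile p"
  have ad: "0 < \<alpha> / (2 * real d)" "\<alpha> / (2 * real d) < 1/2"
  proof -
    show "0 < \<alpha> / (2 * real d)" using alpha d_pos by simp
    have "1 \<le> d" unfolding d_def by (simp add: Suc_le_eq)
    then have "1 \<le> real d" by simp
    then have "\<alpha> \<le> \<alpha> * real d" using alpha by simp
    then show "\<alpha> / (2 * real d) < 1/2" using alpha d_pos by (simp add: field_simps)
  qed
  have p01: "0 < p" "p < 1" using ad unfolding p_def by auto
  have Phiz: "Phi0 z = p"
    unfolding z_def std_normal_quantile_def using Phi0_quantile[OF p01] .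
  have Phi00: "Phi0 0 = 1/2" using Phi0_sym[of 0] by simp
  have z_pos: "0 < z"
  proof (rule ccontr)
    assume "\<not> 0 < z"
    then have "Phi0 z \<le> Phi0 0"
      using Phi0_strict[of z 0] by (cases "z = 0") auto
    then show False using Phiz Phi00 ad unfolding p_def by simp
  qed
  have Smp_meas: "Smp j \<in> measurable S P" for j
    using iid_indep unfolding S.indep_vars_def by auto
  have Zm[measurable]: "(\<lambda>\<omega>. Zv \<omega> $ i) \<in> borel_measurable P" for i using Z_L2 by blast
  have Phm[measurable]: "(\<lambda>\<omega>. Phi (Xv \<omega>) $ k) \<in> borel_measurable P" for k using Phi_L2 by blast
  have gm[measurable]: "(\<lambda>\<omega>. gy (Zv \<omega>) (Ey \<omega>)) \<in> borel_measurable P" using g_L2 by blast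
  have Y_alt: "Yv = (\<lambda>\<omega>. (\<Sum>k\<in>UNIV. \<theta>s $ k * Phi (Xv \<omega>) $ k) + gy (Zv \<omega>) (Ey \<omega>))"
    by (rule ext) (simp add: Y_eq inner_vec_def)
  have Ym: "Yv \<in> borel_measurable P" unfolding Y_alt by measurable
  have YSm[measurable]: "(\<lambda>s. Yv (Smp j s)) \<in> borel_measurable S" for j
    using measurable_compose[OF Smp_meas Ym] by (simp add: comp_def)
  have ZSm[measurable]: "(\<lambda>s. Zv (Smp j s) $ i) \<in> borel_measurable S" for j i
    using measurable_compose[OF Smp_meas Zm] by (simp add: comp_def)
  have bh_alt: "beta_hat n s $ i = (\<Sum>j<n. Yv (Smp j s) * Zv (Smp j s) $ i) / n
      - ((\<Sum>j<n. Yv (Smp j s)) / n) * ((\<Sum>j<n. Zv (Smp j s) $ i) / n)" for n s i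
    by (simp add: beta_hat_def sample_cov_def)
  have bhm[measurable]: "(\<lambda>s. beta_hat n s $ i) \<in> borel_measurable S" for n i
    unfolding bh_alt by measurable
  have vnth: "(\<lambda>v::real^'dz. v $ i) \<in> borel_measurable borel" for i
    by (intro borel_measurable_continuous_onI continuous_intros)
  have shm[measurable]: "(\<lambda>s. sehat n s $ i) \<in> borel_measurable S" for n i
    using measurable_compose[OF sehat_meas vnth] by (simp add: comp_def)
  have gamma_eq: "gamma_g $ i = beta_y $ i - theta_dot \<theta>s beta_Phi $ i" for i
  proof -
    have "beta_y $ i = covar P (\<lambda>x. \<theta>s \<bullet> Phi (Xv x) + gy (Zv x) (Ey x)) (\<lambda>\<omega>. Zv \<omega> $ i)"
    proof -
      have "Yv = (\<lambda>x. \<theta>s \<bullet> Phi (Xv x) + gy (Zv x) (Ey x))" by (rule ext) (rule Y_eq)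
      then show ?thesis unfolding beta_y_def by simp
    qed
    also have "\<dots> = (\<Sum>k\<in>UNIV. \<theta>s $ k * covar P (\<lambda>x. Phi (Xv x) $ k) (\<lambda>\<omega>. Zv \<omega> $ i))
        + covar P (\<lambda>x. gy (Zv x) (Ey x)) (\<lambda>\<omega>. Zv \<omega> $ i)"
      by (rule covar_lin[where Ph="\<lambda>x. Phi (Xv x)"]) (use P_prob Z_L2 Phi_L2 g_L2 in auto)
    finally show ?thesis
      unfolding gamma_g_def theta_dot_def beta_Phi_def by simp
  qed
  obtain U0 where U0: "U0 \<in> max_assignments K b"
    and U0b: "\<And>i. U0 i = K + 1 \<or> \<bar>gamma_g $ i\<bar> \<le> tau (U0 i)"
    using budget_assign[OF b_mono b_le gamma_budget] by blast
  define W where "W = (\<lambda>n i s. sqrt (real n) * (beta_hat n s $ i - beta_y $ i) / Se $ i)"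
  have Wm[measurable]: "W n i \<in> borel_measurable S" for n i unfolding W_def by measurable
  define F where "F = (\<lambda>n i x. cdf (distr S borel (W n i)) x)"
  have F_eq: "F n i x = measure S {s \<in> space S. W n i s \<le> x}" for n i x
    unfolding F_def cdf_def2 by (subst measure_distr) (auto intro!: arg_cong[where f="measure S"])
  have F_lim: "(\<lambda>n. F n i x) \<longlonglongrightarrow> Phi0 x" for i x
    using asym_normal[of i] Phi0_cont[of x] unfolding weak_conv_m_def weak_conv_def F_def W_def by blast
  have incl: "\<theta>s \<in> T_hat n s"
    if n: "0 < n" and eps: "0 < \<epsilon>" "\<epsilon> < 1"
      and G: "\<And>i. \<bar>W n i s\<bar> \<le> z * (1 - \<epsilon>) \<and> \<bar>sehat n s $ i - Se $ i\<bar> \<le> \<epsilon> * Se $ i"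
    for n s \<epsilon>
  proof -
    have sn: "0 < sqrt (real n)" using n by simp
    have e_le: "\<bar>beta_hat n s $ i - beta_y $ i\<bar> \<le> delta n s $ i" for i
    proof -
      have Sei: "0 < Se $ i" by (rule Se_pos)
      have "sqrt (real n) * \<bar>beta_hat n s $ i - beta_y $ i\<bar> / Se $ i \<le> z * (1 - \<epsilon>)"
        using G[of i] Sei sn by (simp add: W_def abs_mult abs_divide)
      then have "sqrt (real n) * \<bar>beta_hat n s $ i - beta_y $ i\<bar> \<le> z * (1 - \<epsilon>) * Se $ i"
        using Sei by (simp add: divide_le_eq)
      also have "\<dots> \<le> z * sehat n s $ i"
      proof -
        have "(1 - \<epsilon>) * Se $ i \<le> sehat n s $ i" using G[of i] by (simp add: algebra_simps abs_le_iff)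
        then show ?thesis using z_pos by (metis mult.assoc mult_left_mono less_imp_le)
      qed
      finally have "\<bar>beta_hat n s $ i - beta_y $ i\<bar> \<le> z * sehat n s $ i / sqrt (real n)"
        using sn by (simp add: le_divide_eq mult.commute)
      then show ?thesis by (simp add: delta_def p_def z_def d_def)
    qed
    have "\<forall>i. U0 i = K + 1 \<or> \<bar>(beta_hat n s - theta_dot \<theta>s beta_Phi) $ i\<bar> \<le> tau (U0 i) + delta n s $ i"
    proof
      fix i
      have eq: "(beta_hat n s - theta_dot \<theta>s beta_Phi) $ i = gamma_g $ i + (beta_hat n s $ i - beta_y $ i)"
        using gamma_eq[of i] by simp
      show "U0 i = K + 1 \<or> \<bar>(beta_hat n s - theta_dot \<theta>s beta_Phi) $ i\<bar> \<le> tau (U0 i) + delta n s $ i"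
        using U0b[of i] e_le[of i] unfolding eq by linarith
    qed
    then show ?thesis using U0 unfolding T_hat_def enlarged_budget_set_def by blast
  qed
  have A_alt: "{s \<in> space S. \<theta>s \<in> T_hat n s} = {s \<in> space S. \<exists>U. U \<in> max_assignments K b \<and>
      (\<forall>i. U i = K + 1 \<or> \<bar>beta_hat n s $ i - theta_dot \<theta>s beta_Phi $ i\<bar>
         \<le> tau (U i) + std_normal_quantile (1 - \<alpha> / (2 * real CARD('dz))) * sehat n s $ i / sqrt (real n))}" for n
    by (auto simp: T_hat_def enlarged_budget_set_def delta_def)
  have A_meas: "{s \<in> space S. \<theta>s \<in> T_hat n s} \<in> sets S" for n
    unfolding A_alt by measurable
  have lower: "1 - (\<Sum>i\<in>UNIV. F n i (- c) + (1 - F n i c)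
        + measure S {s \<in> space S. \<epsilon> * Se $ i < \<bar>sehat n s $ i - Se $ i\<bar>})
      \<le> measure S {s \<in> space S. \<theta>s \<in> T_hat n s}"
    if n: "0 < n" and eps: "0 < \<epsilon>" "\<epsilon> < 1" and c: "c = z * (1 - \<epsilon>)" for n \<epsilon> c
  proof -
    define B1 where "B1 = (\<lambda>i. {s \<in> space S. c < \<bar>W n i s\<bar>})"
    define B2 where "B2 = (\<lambda>i. {s \<in> space S. \<epsilon> * Se $ i < \<bar>sehat n s $ i - Se $ i\<bar>})"
    define Bad where "Bad = (\<Union>i\<in>UNIV. B1 i \<union> B2 i)"
    have B1m: "B1 i \<in> sets S" for i unfolding B1_def by measurable
    have B2m: "B2 i \<in> sets S" for i unfolding B2_def by measurable
    have Badm: "Bad \<in> sets S" unfolding Bad_def using B1m B2m by auto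
    have sub: "space S - Bad \<subseteq> {s \<in> space S. \<theta>s \<in> T_hat n s}"
    proof
      fix s assume s: "s \<in> space S - Bad"
      have "\<bar>W n i s\<bar> \<le> z * (1 - \<epsilon>) \<and> \<bar>sehat n s $ i - Se $ i\<bar> \<le> \<epsilon> * Se $ i" for i
        using s c unfolding Bad_def B1_def B2_def by (auto simp: not_less)
      then show "s \<in> {s \<in> space S. \<theta>s \<in> T_hat n s}" using incl[OF n eps] s by auto
    qed
    have B1b: "measure S (B1 i) \<le> F n i (- c) + (1 - F n i c)" for i
    proof -
      have "B1 i \<subseteq> {s \<in> space S. W n i s \<le> - c} \<union> (space S - {s \<in> space S. W n i s \<le> c})"
        unfolding B1_def by auto
      then have "measure S (B1 i) \<le> measure S ({s \<in> space S. W n i s \<le> - c} \<union> (space S - {s \<in> space S. W n i s \<le> c}))"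
        by (intro S.finite_measure_mono) auto
      also have "\<dots> \<le> measure S {s \<in> space S. W n i s \<le> - c} + measure S (space S - {s \<in> space S. W n i s \<le> c})"
        by (intro measure_Un_le) auto
      also have "measure S (space S - {s \<in> space S. W n i s \<le> c}) = 1 - measure S {s \<in> space S. W n i s \<le> c}"
        by (intro S.prob_compl) auto
      finally show ?thesis by (simp add: F_eq)
    qed
    have "measure S Bad \<le> (\<Sum>i\<in>UNIV. measure S (B1 i \<union> B2 i))"
      unfolding Bad_def using B1m B2m by (intro S.finite_measure_subadditive_finite) auto
    also have "\<dots> \<le> (\<Sum>i\<in>UNIV. F n i (- c) + (1 - F n i c) + measure S (B2 i))"
    proof (intro sum_mono)
      fix i
      have "measure S (B1 i \<union> B2 i) \<le> measure S (B1 i) + measure S (B2 i)"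
        using B1m B2m by (intro measure_Un_le) auto
      then show "measure S (B1 i \<union> B2 i) \<le> F n i (- c) + (1 - F n i c) + measure S (B2 i)"
        using B1b[of i] by linarith
    qed
    finally have bad: "measure S Bad \<le> (\<Sum>i\<in>UNIV. F n i (- c) + (1 - F n i c) + measure S (B2 i))" .
    have "1 - measure S Bad = measure S (space S - Bad)" using S.prob_compl[OF Badm] by simp
    also have "\<dots> \<le> measure S {s \<in> space S. \<theta>s \<in> T_hat n s}"
      using sub A_meas by (intro S.finite_measure_mono) auto
    finally show ?thesis using bad unfolding B2_def by linarith
  qed
  define L where "L = (\<lambda>c. real d * (Phi0 (- c) + (1 - Phi0 c)))"
  have Lz: "L z = \<alpha>"
    unfolding L_def using Phi0_sym[of z] Phiz d_pos unfolding p_def by (simp add: field_simps)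
  have L_cont: "isCont L z"
  proof -
    have "isCont (\<lambda>c. Phi0 (- c)) z"
      by (rule isCont_o2[OF continuous_minus[OF continuous_ident] Phi0_cont])
    then show ?thesis unfolding L_def using Phi0_cont[of z] by (intro continuous_intros) auto
  qed
  have ev: "eventually (\<lambda>n. 1 - \<alpha> - \<eta> < measure S {s \<in> space S. \<theta>s \<in> T_hat n s}) sequentially"
    if eta: "0 < \<eta>" for \<eta>
  proof -
    obtain \<rho> where rho: "0 < \<rho>" and rhoP: "\<And>c. dist c z < \<rho> \<Longrightarrow> dist (L c) (L z) < \<eta> / 2"
      using L_cont eta unfolding continuous_at_eps_delta by (meson half_gt_zero)
    define \<epsilon> where "\<epsilon> = min (1/2) (\<rho> / (2 * z))"
    have eps: "0 < \<epsilon>" "\<epsilon> < 1" using rho z_pos by (auto simp: \<epsilon>_def)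
    define c where "c = z * (1 - \<epsilon>)"
    have "dist c z = z * \<epsilon>" using z_pos eps by (simp add: c_def dist_real_def algebra_simps)
    also have "\<dots> \<le> z * (\<rho> / (2 * z))" using z_pos by (intro mult_left_mono) (auto simp: \<epsilon>_def)
    also have "\<dots> < \<rho>" using z_pos rho by simp
    finally have "dist (L c) (L z) < \<eta> / 2" by (rule rhoP)
    then have "\<bar>L c - \<alpha>\<bar> < \<eta> / 2" using Lz by (simp add: dist_real_def)
    then have Lc: "L c < \<alpha> + \<eta>" using eta abs_ge_self[of "L c - \<alpha>"] by linarith
    define h where "h = (\<lambda>n. \<Sum>i\<in>UNIV. F n i (- c) + (1 - F n i c)
        + measure S {s \<in> space S. \<epsilon> * Se $ i < \<bar>sehat n s $ i - Se $ i\<bar>})"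
    have "h \<longlonglongrightarrow> (\<Sum>i\<in>(UNIV::'dz set). Phi0 (- c) + (1 - Phi0 c) + 0)"
      unfolding h_def
      by (intro tendsto_sum tendsto_add tendsto_diff tendsto_const F_lim sehat_cons)
         (use eps Se_pos in auto)
    also have "(\<Sum>i\<in>(UNIV::'dz set). Phi0 (- c) + (1 - Phi0 c) + 0) = L c"
      by (simp add: L_def d_def)
    finally have "h \<longlonglongrightarrow> L c" .
    then have "eventually (\<lambda>n. h n < \<alpha> + \<eta>) sequentially"
      using Lc by (rule order_tendstoD)
    moreover have "eventually (\<lambda>n. 0 < n) sequentially" by (rule eventually_gt_at_top)
    ultimately show ?thesis
    proof eventually_elim
      case (elim n)
      then show ?case using lower[OF elim(2) eps c_def] unfolding h_def by linarith
    qed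
  qed
  show ?thesis
    unfolding liminf_SUP_INF[symmetric]
  proof (subst le_Liminf_iff, intro allI impI)
    fix y :: ereal assume y: "y < ereal (1 - \<alpha>)"
    show "eventually (\<lambda>n. y < ereal (measure S {s \<in> space S. \<theta>s \<in> T_hat n s})) sequentially"
    proof (cases y)
      case (real r)
      then have "0 < 1 - \<alpha> - r" using y by simp
      from ev[OF this] show ?thesis
        by eventually_elim (simp add: real)
    next
      case PInf then show ?thesis using y by simp
    next
      case MInf then show ?thesis by simp
    qed
  qed
qed

end
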